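(* Let $p,q\ge 2$ be integers with $q\equiv \pm 1\pmod p$. Then $$\sum_{\substack{n=1\\ p\nmid n,\ q\nmid n}}^{pq-1}\frac{\cot(\pi n/p)\cot(\pi n/q)}{\sin^2(\pi n/(pq))}=\begin{cases}\dfrac{1}{45p}(p^2-1)(p^2-4)(q-1)^2(q+2), & q\equiv 1\pmod p,\\[2mm] \dfrac{1}{45p}(p^2-1)(p^2-4)(q+1)^2(q-2), & q\equiv -1\pmod p.\end{cases}$$ *)

theory Defs
  imports Complex_Main "HOL-Number_Theory.Cong"
begin

end

theory Submission
  imports Defs "HOL-Real_Asymp.Real_Asymp"
begin


lemma cot_shift_int: "cot (x + of_int m * pi) = cot x"
  by (simp add: cot_altdef)

lemma sin2_shift_int: "sin (x + of_int m * pi) ^ 2 = sin x ^ 2"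
proof -
  have s: "sin (of_int m * pi) = 0" by (simp add: mult.commute)
  have c: "cos (of_int m * pi) ^ 2 = 1" using sin_cos_squared_add[of "of_int m * pi"] s by simp
  show ?thesis by (simp add: sin_add s power_mult_distrib c)
qed

lemma sin_mult_nz: "sin (real n * y) \<noteq> 0 \<Longrightarrow> sin y \<noteq> 0"
proof
  assume "sin (real n * y) \<noteq> 0" "sin y = 0"
  then obtain i :: int where "y = of_int i * pi" by (auto simp: sin_zero_iff_int2)
  hence "real n * y = of_int (int n * i) * pi" by simp
  hence "sin (real n * y) = 0" unfolding sin_zero_iff_int2 by blast
  thus False using \<open>sin (real n * y) \<noteq> 0\<close> by simp
qed

lemma cot_cis: assumes "sin y \<noteq> 0"
  shows "complex_of_real (cot y) = \<i> + 2 * \<i> / (cis (2 * y) - 1)"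
proof -
  have "cis (2*y) - 1 = Complex (- 2 * sin y ^ 2) (2 * sin y * cos y)"
    by (simp add: complex_eq_iff cos_double_sin sin_double)
  also have "\<dots> = 2 * of_real (sin y) * \<i> * cis y"
    by (simp add: complex_eq_iff power2_eq_square)
  finally have e: "cis (2*y) - 1 = 2 * of_real (sin y) * \<i> * cis y" .
  have nz: "cis y \<noteq> 0" by simp
  have "\<i> * of_real (sin y) * cis y + 1 = of_real (cos y) * cis y"
    by (simp add: complex_eq_iff cis.ctr power2_eq_square)
       (smt (verit) sin_cos_squared_add power2_eq_square)
  hence "\<i> + 2 * \<i> / (2 * of_real (sin y) * \<i> * cis y) = of_real (cos y) * cis y / (of_real (sin y) * cis y)"
    using assms nz by (simp add: field_simps)
  also have "\<dots> = of_real (cot y)"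
    using assms nz by (simp add: cot_def)
  finally show ?thesis using e by simp
qed

lemma root_sum:
  fixes z w :: complex and q :: nat
  assumes q: "q \<ge> 1" and wq: "w ^ q = 1" and wm: "\<And>m. 0 < m \<Longrightarrow> m < q \<Longrightarrow> w ^ m \<noteq> 1"
    and zq: "z ^ q \<noteq> 1"
  shows "(\<Sum>c<q. 1 / (z * w ^ c - 1)) = of_nat q / (z ^ q - 1)"
proof -
  have uq: "(z * w ^ c) ^ q = z ^ q" for c
    by (simp add: power_mult_distrib flip: power_mult) (simp add: power_mult mult.commute[of c] wq)
  have each: "1 / (z * w ^ c - 1) = (\<Sum>m<q. (z * w ^ c) ^ m) / (z ^ q - 1)" for c
  proof -
    have ne: "z * w ^ c \<noteq> 1" using uq[of c] zq by auto
    have "(\<Sum>m<q. (z * w ^ c) ^ m) = ((z * w ^ c) ^ q - 1) / (z * w ^ c - 1)"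
      using geometric_sum[OF ne] by simp
    thus ?thesis using uq[of c] zq ne by (simp add: field_simps)
  qed
  have inner: "(\<Sum>c<q. (w ^ m) ^ c) = (if m = 0 then of_nat q else 0)" if "m < q" for m
  proof (cases "m = 0")
    case False
    have ne: "w ^ m \<noteq> 1" using wm[of m] False that by auto
    have "(w ^ m) ^ q = 1" by (simp flip: power_mult) (simp add: power_mult mult.commute[of m] wq)
    thus ?thesis using geometric_sum[OF ne, of q] False by simp
  qed simp
  have "(\<Sum>c<q. 1 / (z * w ^ c - 1)) = (\<Sum>c<q. \<Sum>m<q. (z * w ^ c) ^ m) / (z ^ q - 1)"
    by (simp add: each sum_divide_distrib)
  also have "(\<Sum>c<q. \<Sum>m<q. (z * w ^ c) ^ m) = (\<Sum>m<q. z ^ m * (\<Sum>c<q. (w ^ m) ^ c))"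
    by (subst sum.swap) (simp add: power_mult_distrib sum_distrib_left flip: power_mult,
        simp add: mult.commute)
  also have "\<dots> = (\<Sum>m<q. z ^ m * (if m = 0 then of_nat q else 0))"
    by (intro sum.cong refl) (simp add: inner)
  also have "\<dots> = of_nat q"
    using q by (simp add: if_distrib sum.If_cases)
  finally show ?thesis .
qed

lemma sin_grid_nz:
  fixes q :: nat
  assumes q: "q \<ge> 1" and sx: "sin (real q * x) \<noteq> 0"
  shows "sin (x + pi * real c / real q) \<noteq> 0"
  proof (rule sin_mult_nz[of q])
    have "real q * (x + pi * real c / real q) = real q * x + of_int (int c) * pi" using q by (simp add: field_simps)
    hence "sin (real q * (x + pi * real c / real q)) ^ 2 = sin (real q * x) ^ 2" using sin2_shift_int[of "real q * x" "int c"] by simp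
    thus "sin (real q * (x + pi * real c / real q)) \<noteq> 0" using sx by auto
  qed

lemma G1:
  fixes q :: nat
  assumes q: "q \<ge> 1" and sx: "sin (real q * x) \<noteq> 0"
  shows "(\<Sum>c<q. cot (x + pi * real c / real q)) = real q * cot (real q * x)"
proof -
  define w where "w = cis (2 * pi / real q)"
  define z where "z = cis (2 * x)"
  have wq: "w ^ q = 1" using q by (simp add: w_def DeMoivre)
  have wm: "w ^ m \<noteq> 1" if "0 < m" "m < q" for m
  proof
    assume "w ^ m = 1"
    hence "cos (real m * (2 * pi / real q)) = 1" by (simp add: w_def DeMoivre complex_eq_iff)
    then obtain n :: int where n: "real m * (2 * pi / real q) = of_int n * 2 * pi"
      by (auto simp: cos_one_2pi_int)
    hence "real m = of_int n * real q" using q by (simp add: field_simps)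
    hence "int m = n * int q" by (metis of_int_eq_iff of_int_mult of_int_of_nat_eq)
    show False
    proof (cases "n \<le> 0")
      case True
      hence "n * int q \<le> 0" by (simp add: mult_nonpos_nonneg)
      thus False using \<open>int m = n * int q\<close> that by simp
    next
      case False
      hence "n * int q \<ge> 1 * int q" by (intro mult_right_mono) auto
      thus False using \<open>int m = n * int q\<close> that by linarith
    qed
  qed
  have zq: "z ^ q = cis (2 * (real q * x))" by (simp add: z_def DeMoivre algebra_simps)
  have zq1: "z ^ q \<noteq> 1"
  proof
    assume "z ^ q = 1"
    hence "cos (2 * (real q * x)) = 1" by (simp add: zq complex_eq_iff)
    hence "sin (real q * x) ^ 2 = 0" by (simp add: cos_double_sin)
    thus False using sx by simp
  qed
  have sc: "sin (x + pi * real c / real q) \<noteq> 0" for c using sin_grid_nz[OF q sx] .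
  have wc: "cis (2 * (x + pi * real c / real q)) = z * w ^ c" for c
    by (simp add: z_def w_def DeMoivre cis_mult algebra_simps)
  have "complex_of_real (\<Sum>c<q. cot (x + pi * real c / real q)) = (\<Sum>c<q. \<i> + 2 * \<i> * (1 / (z * w ^ c - 1)))"
    unfolding of_real_sum by (intro sum.cong refl) (simp only: cot_cis[OF sc] wc, simp)
  also have "\<dots> = of_nat q * \<i> + 2 * \<i> * (of_nat q / (z ^ q - 1))"
  proof -
    have "(\<Sum>c<q. \<i> + 2 * \<i> * (1 / (z * w ^ c - 1))) = (\<Sum>c<q. \<i>) + 2 * \<i> * (\<Sum>c<q. 1 / (z * w ^ c - 1))"
      by (simp only: sum.distrib sum_distrib_left)
    thus ?thesis by (simp only: root_sum[OF q wq wm zq1]) simp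
  qed
  also have "\<dots> = of_nat q * (\<i> + 2 * \<i> / (z ^ q - 1))" by (simp add: algebra_simps)
  also have "\<dots> = complex_of_real (real q * cot (real q * x))"
    by (simp add: cot_cis[OF sx] zq)
  finally show ?thesis by (simp only: of_real_eq_iff)
qed

lemma grid_deriv:
  fixes f g f' :: "real \<Rightarrow> real" and q :: nat
  assumes q: "q \<ge> 1" and sx: "sin (real q * x0) \<noteq> 0"
    and eq: "\<And>x. sin (real q * x) \<noteq> 0 \<Longrightarrow> (\<Sum>c<q. f (x + pi * real c / real q)) = g x"
    and df: "\<And>y. sin y \<noteq> 0 \<Longrightarrow> (f has_real_derivative f' y) (at y)"
    and dg: "(g has_real_derivative g') (at x0)"
  shows "(\<Sum>c<q. f' (x0 + pi * real c / real q)) = g'"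
proof -
  define U where "U = {x. sin (real q * x) \<noteq> 0}"
  have oU: "open U" unfolding U_def
    by (rule open_Collect_neq) (auto intro!: continuous_intros)
  have dF: "((\<lambda>x. \<Sum>c<q. f (x + pi * real c / real q)) has_real_derivative (\<Sum>c<q. f' (x0 + pi * real c / real q))) (at x0)"
  proof (rule DERIV_sum)
    fix c assume "c \<in> {..<q}"
    have "(f has_real_derivative f' (x0 + pi * real c / real q)) (at (x0 + pi * real c / real q))"
      by (rule df) (rule sin_grid_nz[OF q sx])
    thus "((\<lambda>x. f (x + pi * real c / real q)) has_real_derivative f' (x0 + pi * real c / real q)) (at x0)"
      by (simp add: DERIV_shift)
  qed
  have "(g has_real_derivative (\<Sum>c<q. f' (x0 + pi * real c / real q))) (at x0)"
    by (rule has_field_derivative_transform_within_open[OF dF oU]) (auto simp: U_def sx eq)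
  thus ?thesis using dg DERIV_unique by blast
qed

lemma G2:
  fixes q :: nat
  assumes q: "q \<ge> 1" and sx: "sin (real q * x) \<noteq> 0"
  shows "(\<Sum>c<q. 1 / sin (x + pi * real c / real q) ^ 2) = real q ^ 2 / sin (real q * x) ^ 2"
proof -
  have "(\<Sum>c<q. (\<lambda>y. - inverse (sin y ^ 2)) (x + pi * real c / real q)) = real q * ((- inverse (sin (real q * x) ^ 2)) * real q)"
  proof (rule grid_deriv[OF q sx, of cot "\<lambda>x. real q * cot (real q * x)"])
    show "(\<Sum>c<q. cot (x + pi * real c / real q)) = real q * cot (real q * x)" if "sin (real q * x) \<noteq> 0" for x
      using G1[OF q that] .
    show "(cot has_real_derivative - inverse (sin y ^ 2)) (at y)" if "sin y \<noteq> 0" for y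
      using DERIV_cot[OF that] .
    show "((\<lambda>x. real q * cot (real q * x)) has_real_derivative real q * (- inverse (sin (real q * x) ^ 2) * real q)) (at x)"
      by (intro DERIV_cmult DERIV_chain2[of cot _ "\<lambda>x. real q * x", OF DERIV_cot[OF sx]]) (auto intro!: derivative_eq_intros)
  qed
  hence "(\<Sum>c<q. inverse (sin (x + pi * real c / real q) ^ 2)) = real q ^ 2 * inverse (sin (real q * x) ^ 2)"
    by (simp only: sum_negf power2_eq_square) (simp add: algebra_simps)
  thus ?thesis by (simp add: divide_inverse)
qed

lemma d_csc2: "sin y \<noteq> 0 \<Longrightarrow> ((\<lambda>y. 1 / sin y ^ 2) has_real_derivative (-2 * cot y / sin y ^ 2)) (at y)"
  by (auto intro!: derivative_eq_intros simp: cot_def field_simps power2_eq_square power3_eq_cube)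

lemma d_cotcsc2: "sin y \<noteq> 0 \<Longrightarrow> ((\<lambda>y. cot y / sin y ^ 2) has_real_derivative (2 / sin y ^ 2 - 3 / sin y ^ 4)) (at y)"
proof -
  assume s: "sin y \<noteq> 0"
  have "((\<lambda>y. cos y / sin y ^ 3) has_real_derivative (2 / sin y ^ 2 - 3 / sin y ^ 4)) (at y)"
    using s apply (auto intro!: derivative_eq_intros simp: field_simps power2_eq_square power3_eq_cube
       eval_nat_numeral)
    using sin_cos_squared_add[of y] by algebra
  moreover have eqf: "(\<lambda>y. cot y / sin y ^ 2) = (\<lambda>y. cos y / sin y ^ 3)"
    by (auto simp: cot_def power2_eq_square power3_eq_cube)
  ultimately show ?thesis by (simp only: eqf)
qed

lemma G3:
  fixes q :: nat
  assumes q: "q \<ge> 1" and sx: "sin (real q * x) \<noteq> 0"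
  shows "(\<Sum>c<q. cot (x + pi * real c / real q) / sin (x + pi * real c / real q) ^ 2) = real q ^ 3 * cot (real q * x) / sin (real q * x) ^ 2"
proof -
  have "(\<Sum>c<q. (\<lambda>y. -2 * cot y / sin y ^ 2) (x + pi * real c / real q)) = real q ^ 2 * ((-2 * cot (real q * x) / sin (real q * x) ^ 2) * real q)"
  proof (rule grid_deriv[OF q sx, of "\<lambda>y. 1 / sin y ^ 2" "\<lambda>x. real q ^ 2 / sin (real q * x) ^ 2"])
    show "(\<Sum>c<q. 1 / sin (x + pi * real c / real q) ^ 2) = real q ^ 2 / sin (real q * x) ^ 2" if "sin (real q * x) \<noteq> 0" for x
      using G2[OF q that] .
    show "((\<lambda>y. 1 / sin y ^ 2) has_real_derivative -2 * cot y / sin y ^ 2) (at y)" if "sin y \<noteq> 0" for y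
      using d_csc2[OF that] .
    have "((\<lambda>x. real q ^ 2 * (1 / sin (real q * x) ^ 2)) has_real_derivative real q ^ 2 * ((-2 * cot (real q * x) / sin (real q * x) ^ 2) * real q)) (at x)"
      by (intro DERIV_cmult DERIV_chain2[of "\<lambda>y. 1 / sin y ^ 2" _ "\<lambda>x. real q * x", OF d_csc2[OF sx]]) (auto intro!: derivative_eq_intros)
    thus "((\<lambda>x. real q ^ 2 / sin (real q * x) ^ 2) has_real_derivative real q ^ 2 * ((-2 * cot (real q * x) / sin (real q * x) ^ 2) * real q)) (at x)"
      by simp
  qed
  moreover have "(\<Sum>c<q. (\<lambda>y. -2 * cot y / sin y ^ 2) (x + pi * real c / real q)) = -2 * (\<Sum>c<q. cot (x + pi * real c / real q) / sin (x + pi * real c / real q) ^ 2)"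
    by (simp add: sum_distrib_left)
  moreover have "real q ^ 2 * ((-2 * cot (real q * x) / sin (real q * x) ^ 2) * real q) = -2 * (real q ^ 3 * cot (real q * x) / sin (real q * x) ^ 2)"
    by (simp add: power2_eq_square power3_eq_cube)
  ultimately show ?thesis by simp
qed

lemma G4:
  fixes q :: nat
  assumes q: "q \<ge> 1" and sx: "sin (real q * x) \<noteq> 0"
  shows "(\<Sum>c<q. 1 / sin (x + pi * real c / real q) ^ 4) = real q ^ 4 / sin (real q * x) ^ 4 - 2/3 * (real q^4 - real q^2) / sin (real q * x) ^ 2"
proof -
  have "(\<Sum>c<q. (\<lambda>y. 2 / sin y ^ 2 - 3 / sin y ^ 4) (x + pi * real c / real q)) = real q ^ 3 * ((2 / sin (real q * x) ^ 2 - 3 / sin (real q * x) ^ 4) * real q)"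
  proof (rule grid_deriv[OF q sx, of "\<lambda>y. cot y / sin y ^ 2" "\<lambda>x. real q ^ 3 * cot (real q * x) / sin (real q * x) ^ 2"])
    show "(\<Sum>c<q. cot (x + pi * real c / real q) / sin (x + pi * real c / real q) ^ 2) = real q ^ 3 * cot (real q * x) / sin (real q * x) ^ 2" if "sin (real q * x) \<noteq> 0" for x
      using G3[OF q that] .
    show "((\<lambda>y. cot y / sin y ^ 2) has_real_derivative 2 / sin y ^ 2 - 3 / sin y ^ 4) (at y)" if "sin y \<noteq> 0" for y
      using d_cotcsc2[OF that] .
    have "((\<lambda>x. real q ^ 3 * (cot (real q * x) / sin (real q * x) ^ 2)) has_real_derivative real q ^ 3 * ((2 / sin (real q * x) ^ 2 - 3 / sin (real q * x) ^ 4) * real q)) (at x)"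
      by (intro DERIV_cmult DERIV_chain2[of "\<lambda>y. cot y / sin y ^ 2" _ "\<lambda>x. real q * x", OF d_cotcsc2[OF sx]]) (auto intro!: derivative_eq_intros)
    thus "((\<lambda>x. real q ^ 3 * cot (real q * x) / sin (real q * x) ^ 2) has_real_derivative real q ^ 3 * ((2 / sin (real q * x) ^ 2 - 3 / sin (real q * x) ^ 4) * real q)) (at x)"
      by simp
  qed
  hence "2 * (\<Sum>c<q. 1 / sin (x + pi * real c / real q) ^ 2) - 3 * (\<Sum>c<q. 1 / sin (x + pi * real c / real q) ^ 4) = real q ^ 4 * (2 / sin (real q * x) ^ 2 - 3 / sin (real q * x) ^ 4)"
    by (simp add: sum_subtractf sum_distrib_left power2_eq_square eval_nat_numeral)
  hence h: "2 * (real q ^ 2 * (1 / sin (real q * x) ^ 2)) - 3 * (\<Sum>c<q. 1 / sin (x + pi * real c / real q) ^ 4) = real q ^ 4 * (2 * (1 / sin (real q * x) ^ 2) - 3 * (1 / sin (real q * x) ^ 4))"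
    unfolding G2[OF q sx] by simp
  define T where "T = (\<Sum>c<q. 1 / sin (x + pi * real c / real q) ^ 4)"
  define K2 where "K2 = 1 / sin (real q * x) ^ 2"
  define K4 where "K4 = 1 / sin (real q * x) ^ 4"
  have "2 * (real q ^ 2 * K2) - 3 * T = real q ^ 4 * (2 * K2 - 3 * K4)" using h unfolding T_def K2_def K4_def .
  hence "3 * T = 2 * (real q ^ 2 * K2) - real q ^ 4 * (2 * K2 - 3 * K4)" by linarith
  hence "T = real q ^ 4 * K4 - 2/3 * (real q^4 - real q^2) * K2" by (simp add: algebra_simps)
  thus ?thesis unfolding T_def K2_def K4_def by simp
qed

lemma lim1: "((\<lambda>y::real. 1 / sin y ^ 2 - 1 / y ^ 2) \<longlongrightarrow> 1/3) (at_right 0)"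
  by real_asymp
lemma lim2: "((\<lambda>y::real. 1 / sin y ^ 4 - 1 / y ^ 4 - 2 / (3 * y^2)) \<longlongrightarrow> 11/45) (at_right 0)"
  by real_asymp
lemma lim_scale: "q > 0 \<Longrightarrow> filterlim (\<lambda>x::real. q * x) (at_right 0) (at_right 0)"
  by real_asymp

lemma odd_sum:
  fixes f :: "nat \<Rightarrow> real"
  assumes "\<And>c. c \<in> {1..<q} \<Longrightarrow> f (q - c) = - f c"
  shows "sum f {1..<q} = 0"
proof -
  have "sum f {1..<q} = sum (\<lambda>c. f (q - c)) {1..<q}"
    by (rule sum.reindex_bij_witness[of _ "\<lambda>c. q - c" "\<lambda>c. q - c"]) auto
  also have "\<dots> = - sum f {1..<q}" using assms by (simp add: sum_negf)
  finally show ?thesis by simp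
qed

lemma refl_arg: "c < q \<Longrightarrow> pi * real (q - c) / real q = - (pi * real c / real q) + of_int 1 * pi"
  by (simp add: of_nat_diff field_simps)

lemma Z1: "(\<Sum>c\<in>{1..<q}. cot (pi * real c / real q)) = 0"
proof (rule odd_sum)
  fix c assume "c \<in> {1..<q}"
  hence "c < q" by simp
  show "cot (pi * real (q - c) / real q) = - cot (pi * real c / real q)"
    by (simp only: refl_arg[OF \<open>c < q\<close>] cot_shift_int cot_minus)
qed

lemma Z3: "(\<Sum>c\<in>{1..<q}. cot (pi * real c / real q) / sin (pi * real c / real q) ^ 2) = 0"
proof (rule odd_sum)
  fix c assume c: "c \<in> {1..<q}"
  have cq: "c < q" using c by simp
  have "sin (pi * real (q - c) / real q) ^ 2 = sin (pi * real c / real q) ^ 2"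
    by (simp only: refl_arg[OF cq] sin2_shift_int, simp)
  moreover have "cot (pi * real (q - c) / real q) = - cot (pi * real c / real q)"
    by (simp only: refl_arg[OF cq] cot_shift_int cot_minus)
  ultimately show "cot (pi * real (q - c) / real q) / sin (pi * real (q - c) / real q) ^ 2 = - (cot (pi * real c / real q) / sin (pi * real c / real q) ^ 2)"
    by simp
qed

lemma sin_grid0_nz: "c \<in> {1..<q} \<Longrightarrow> sin (pi * real c / real q) \<noteq> 0"
proof
  assume c: "c \<in> {1..<q}" and "sin (pi * real c / real q) = 0"
  then obtain i :: int where "pi * real c / real q = of_int i * pi" by (auto simp: sin_zero_iff_int2)
  hence "pi * real c = pi * (of_int i * real q)" using c by (simp add: field_simps)
  hence "real c = of_int i * real q" by simp
  hence ci: "int c = i * int q" by (metis of_int_eq_iff of_int_mult of_int_of_nat_eq)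
  show False
  proof (cases "i \<le> 0")
    case True
    hence "i * int q \<le> 0" by (simp add: mult_nonpos_nonneg)
    thus False using ci c by simp
  next
    case False
    hence "i * int q \<ge> 1 * int q" by (intro mult_right_mono) auto
    thus False using ci c by simp
  qed
qed

lemma small_x:
  fixes q :: nat assumes q: "q \<ge> 1" and x: "x \<in> {0<..<pi / real q}"
  shows "sin (real q * x) \<noteq> 0" "sin x \<noteq> 0"
proof -
  have "0 < real q * x" "real q * x < pi" using x q by (auto simp: field_simps)
  thus "sin (real q * x) \<noteq> 0" using sin_gt_zero by force
  have "pi / real q \<le> pi / 1" using q by (intro divide_left_mono) auto
  hence "x < pi" using x by simp
  thus "sin x \<noteq> 0" using x sin_gt_zero by force
qed

lemma split0: fixes f :: "nat \<Rightarrow> 'a::comm_monoid_add" shows "q \<ge> 1 \<Longrightarrow> (\<Sum>c<q. f c) = f 0 + (\<Sum>c\<in>{1..<q}. f c)"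
proof -
  assume "q \<ge> 1"
  thus ?thesis using sum.atLeast_Suc_lessThan[where m=0 and n=q and g=f] by (simp add: atLeast0LessThan)
qed

lemma Z2:
  fixes q :: nat assumes q: "q \<ge> 1"
  shows "(\<Sum>c\<in>{1..<q}. 1 / sin (pi * real c / real q) ^ 2) = (real q ^ 2 - 1) / 3"
proof -
  define F where "F x = (\<Sum>c\<in>{1..<q}. 1 / sin (x + pi * real c / real q) ^ 2)" for x
  have "(F \<longlongrightarrow> F 0) (at_right 0)"
    unfolding F_def by (intro tendsto_intros) (auto simp: sin_grid0_nz)
  moreover have "(F \<longlongrightarrow> real q ^ 2 * (1/3) - 1/3) (at_right 0)"
  proof -
    have qp: "real q > 0" using q by simp
    have "((\<lambda>x. real q ^ 2 * (1 / sin (real q * x) ^ 2 - 1 / (real q * x) ^ 2) - (1 / sin x ^ 2 - 1 / x ^ 2)) \<longlongrightarrow> real q ^ 2 * (1/3) - 1/3) (at_right 0)"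
      by (intro tendsto_intros filterlim_compose[OF lim1 lim_scale[OF qp]] lim1)
    moreover have "eventually (\<lambda>x. real q ^ 2 * (1 / sin (real q * x) ^ 2 - 1 / (real q * x) ^ 2) - (1 / sin x ^ 2 - 1 / x ^ 2) = F x) (at_right 0)"
    proof -
      have "eventually (\<lambda>x. x \<in> {0<..<pi / real q}) (at_right 0)"
        by (rule eventually_at_right_real) (use qp in simp)
      thus ?thesis
      proof (rule eventually_mono)
        fix x assume x: "x \<in> {0<..<pi / real q}"
        note sx = small_x[OF q x]
        have "F x = real q ^ 2 / sin (real q * x) ^ 2 - 1 / sin x ^ 2"
          using G2[OF q sx(1)] split0[OF q, of "\<lambda>c. 1 / sin (x + pi * real c / real q) ^ 2"]
          by (simp add: F_def)
        moreover have "real q ^ 2 * (1 / (real q * x) ^ 2) = 1 / x ^ 2" using qp x by (simp add: field_simps)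
        ultimately show "real q ^ 2 * (1 / sin (real q * x) ^ 2 - 1 / (real q * x) ^ 2) - (1 / sin x ^ 2 - 1 / x ^ 2) = F x"
          by (simp add: algebra_simps)
      qed
    qed
    ultimately show ?thesis by (rule Lim_transform_eventually)
  qed
  ultimately have "F 0 = real q ^ 2 * (1/3) - 1/3" by (rule tendsto_unique[rotated 1]) simp
  thus ?thesis by (simp add: F_def)
qed



lemma Z4:
  fixes q :: nat assumes q: "q \<ge> 1"
  shows "(\<Sum>c\<in>{1..<q}. 1 / sin (pi * real c / real q) ^ 4) = (real q ^ 2 - 1) * (real q ^ 2 + 11) / 45"
proof -
  define F where "F x = (\<Sum>c\<in>{1..<q}. 1 / sin (x + pi * real c / real q) ^ 4)" for x
  define g where "g y = 1 / sin y ^ 2 - 1 / y ^ 2" for y :: real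
  define h where "h y = 1 / sin y ^ 4 - 1 / y ^ 4 - 2 / (3 * y^2)" for y :: real
  have "(F \<longlongrightarrow> F 0) (at_right 0)"
    unfolding F_def by (intro tendsto_intros) (auto simp: sin_grid0_nz)
  moreover have "(F \<longlongrightarrow> real q ^ 4 * (11/45) - 2/3 * (real q ^ 4 - real q ^ 2) * (1/3) - 11/45) (at_right 0)"
  proof -
    have qp: "real q > 0" using q by simp
    have "((\<lambda>x. real q ^ 4 * h (real q * x) - 2/3 * (real q ^ 4 - real q ^ 2) * g (real q * x) - h x) \<longlongrightarrow> real q ^ 4 * (11/45) - 2/3 * (real q ^ 4 - real q ^ 2) * (1/3) - 11/45) (at_right 0)"
      unfolding g_def h_def by (intro tendsto_intros filterlim_compose[OF lim1 lim_scale[OF qp]] filterlim_compose[OF lim2 lim_scale[OF qp]] lim2)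
    moreover have "eventually (\<lambda>x. real q ^ 4 * h (real q * x) - 2/3 * (real q ^ 4 - real q ^ 2) * g (real q * x) - h x = F x) (at_right 0)"
    proof -
      have "eventually (\<lambda>x. x \<in> {0<..<pi / real q}) (at_right 0)"
        by (rule eventually_at_right_real) (use qp in simp)
      thus ?thesis
      proof (rule eventually_mono)
        fix x assume x: "x \<in> {0<..<pi / real q}"
        note sx = small_x[OF q x]
        have "F x = real q ^ 4 / sin (real q * x) ^ 4 - 2/3 * (real q^4 - real q^2) / sin (real q * x) ^ 2 - 1 / sin x ^ 4"
          using G4[OF q sx(1)] split0[OF q, of "\<lambda>c. 1 / sin (x + pi * real c / real q) ^ 4"]
          by (simp add: F_def)
        moreover have "real q ^ 4 * (1 / (real q * x) ^ 4) = 1 / x ^ 4" using qp x by (simp add: field_simps)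
        moreover have "real q ^ 4 * (2 / (3 * (real q * x) ^ 2)) - 2/3 * (real q ^ 4 - real q ^ 2) * (1 / (real q * x) ^ 2) = 2 / (3 * x ^ 2)"
          using qp x by (simp add: field_simps power2_eq_square)
        moreover have "real q ^ 4 * h (real q * x) - 2/3 * (real q ^ 4 - real q ^ 2) * g (real q * x) - h x
           = real q ^ 4 * (1 / sin (real q * x) ^ 4) - real q ^ 4 * (1 / (real q * x) ^ 4) - real q ^ 4 * (2 / (3 * (real q * x) ^ 2))
             - 2/3 * (real q ^ 4 - real q ^ 2) * (1 / sin (real q * x) ^ 2) + 2/3 * (real q ^ 4 - real q ^ 2) * (1 / (real q * x) ^ 2)
             - 1 / sin x ^ 4 + 1 / x ^ 4 + 2 / (3 * x^2)"
          unfolding g_def h_def by (simp only: right_diff_distrib)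
        moreover have "real q ^ 4 / sin (real q * x) ^ 4 = real q ^ 4 * (1 / sin (real q * x) ^ 4)" by simp
        moreover have "2/3 * (real q ^ 4 - real q ^ 2) / sin (real q * x) ^ 2 = 2/3 * (real q ^ 4 - real q ^ 2) * (1 / sin (real q * x) ^ 2)" by simp
        ultimately show "real q ^ 4 * h (real q * x) - 2/3 * (real q ^ 4 - real q ^ 2) * g (real q * x) - h x = F x"
          by linarith
      qed
    qed
    ultimately show ?thesis by (rule Lim_transform_eventually)
  qed
  ultimately have "F 0 = real q ^ 4 * (11/45) - 2/3 * (real q ^ 4 - real q ^ 2) * (1/3) - 11/45" by (rule tendsto_unique[rotated 1]) simp
  thus ?thesis by (simp add: F_def field_simps)
qed

lemma P0a: fixes a b c d e f :: real assumes h: "a^2+b^2=1" "c^2+d^2=1" "e = a*d+b*c" "f = b*d-a*c" and nz: "a \<noteq> 0" "c \<noteq> 0" "e \<noteq> 0"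
  shows "(f/e)/a^2 = (f/e - b/a)/c^2 + (d/c)/a^2"
  using nz apply (simp add: field_simps)
  using h by algebra

lemma P1a: fixes a b c d e f :: real assumes h: "a^2+b^2=1" "c^2+d^2=1" "e = a*d+b*c" "f = b*d-a*c" and nz: "a \<noteq> 0" "c \<noteq> 0" "e \<noteq> 0"
  shows "(1/e^2) * (1/a^2) = (1/a^2 + 1/e^2) * (1/c^2) + 2*(d/c)*(1/c^2)*(f/e - b/a)"
  using nz apply (simp add: field_simps)
  using h by algebra
lemma P2a: fixes a b c d e f :: real assumes h: "a^2+b^2=1" "c^2+d^2=1" "e = a*d+b*c" "f = b*d-a*c" and nz: "a \<noteq> 0" "c \<noteq> 0" "e \<noteq> 0"
  shows "(f/e) * (b/a) * (1/a^2) = (d/c) * (b/a) * (1/a^2) - (1/c^2) * (1/a^2) + (d/c)*(1/c^2) * (b/a - f/e)"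
  using nz apply (simp add: field_simps)
  using h by algebra
lemma P3a: fixes a b c d e f :: real assumes h: "a^2+b^2=1" "c^2+d^2=1" "e = a*d+b*c" "f = b*d-a*c" and nz: "a \<noteq> 0" "c \<noteq> 0" "e \<noteq> 0"
  shows "(f/e) * (1/e^2) * (b/a) = - (d/c) * (f/e) * (1/e^2) - (1/c^2)*(1/e^2) - (d/c)*(1/c^2) * (f/e - b/a)"
  using nz apply (simp add: field_simps)
  using h by algebra
lemma Eatoms: fixes A C D E X Y :: real
  assumes "E*A = (A+E)*C + 2*D*C*(X - Y)" "X*Y*A = D*Y*A - C*A + D*C*(Y - X)" "X*E*Y = -D*X*E - C*E - D*C*(X - Y)"
  shows "E*A - 2*(X*Y*A) + X*E*Y = 3*C*A + 3*D*C*(X-Y) - 2*D*Y*A - D*X*E"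
  using assms by (simp add: algebra_simps)

lemma P0:
  fixes t u :: real
  assumes "sin t \<noteq> 0" "sin u \<noteq> 0" "sin (t - u) \<noteq> 0"
  shows "cot t / sin (t - u)^2 = (cot t - cot (t - u)) / sin u ^ 2 + cot u / sin (t - u) ^ 2"
proof -
  have t: "t = (t - u) + u" by simp
  have "sin t = sin (t-u) * cos u + cos (t-u) * sin u" "cos t = cos (t-u) * cos u - sin (t-u) * sin u"
    by (subst t, simp only: sin_add cos_add)+
  from P0a[OF sin_cos_squared_add[of "t-u"] sin_cos_squared_add[of u] this assms(3,2,1)]
  show ?thesis by (simp add: cot_def)
qed

lemma Etrig:
  fixes v th :: real
  assumes "sin v \<noteq> 0" "sin th \<noteq> 0" "sin (v + th) \<noteq> 0"
  shows "(1/sin (v+th)^2) * (1/sin v^2) - 2 * (cot (v+th) * cot v * (1/sin v^2)) + cot (v+th) * (1/sin (v+th)^2) * cot v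
    = 3 * (1/sin th^2) * (1/sin v^2) + 3 * cot th * (1/sin th^2) * (cot (v+th) - cot v) - 2 * cot th * cot v * (1/sin v^2) - cot th * cot (v+th) * (1/sin (v+th)^2)"
proof -
  have "sin (v+th) = sin v * cos th + cos v * sin th" "cos (v+th) = cos v * cos th - sin v * sin th"
    by (simp_all only: sin_add cos_add)
  note h = sin_cos_squared_add[of v] sin_cos_squared_add[of th] this assms
  have c: "cot v = cos v / sin v" "cot th = cos th / sin th" "cot (v+th) = cos (v+th) / sin (v+th)" by (simp_all add: cot_def)
  show ?thesis unfolding c
    by (rule Eatoms[OF P1a[OF h] P2a[OF h] P3a[OF h]])
qed



lemma coprime_of_cong:
  fixes p q :: nat and e :: int
  assumes "[int q = e] (mod int p)" "e = 1 \<or> e = -1"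
  shows "coprime p q"
proof -
  obtain k where k: "e = int q + int p * k" using assms(1) by (auto simp: cong_iff_lin)
  have "coprime (int p) (int q)"
  proof (rule coprimeI)
    fix c assume "c dvd int p" "c dvd int q"
    hence "c dvd e" using k by simp
    thus "is_unit c" using assms(2) by auto
  qed
  thus ?thesis by simp
qed

lemma sin_pv_nz:
  fixes p q c :: nat
  assumes cop: "coprime p q" and c: "c \<in> {1..<q}"
  shows "sin (real p * (pi * real c / real q)) \<noteq> 0"
proof
  assume "sin (real p * (pi * real c / real q)) = 0"
  then obtain i :: int where i: "real p * (pi * real c / real q) = of_int i * pi" by (auto simp: sin_zero_iff_int2)
  have "pi * (real p * real c) = pi * (of_int i * real q)" using i c by (simp add: field_simps)
  hence "real p * real c = of_int i * real q" by simp
  hence "int p * int c = i * int q" by (metis of_int_eq_iff of_int_mult of_int_of_nat_eq)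
  hence "int q dvd int p * int c" by simp
  hence "q dvd p * c" by (metis of_nat_dvd_iff of_nat_mult)
  hence "q dvd c" using cop by (metis coprime_commute coprime_dvd_mult_right_iff)
  thus False using c by (auto dest: dvd_imp_le)
qed

lemma inner_sum:
  fixes p :: nat and u :: real
  assumes p: "p \<ge> 1" and su: "sin u \<noteq> 0" and spu: "sin (real p * u) \<noteq> 0"
  shows "(\<Sum>a\<in>{1..<p}. cot (pi * real a / real p) / sin (pi * real a / real p - u)^2)
       = real p * cot (real p * u) / sin u^2 - 2 * cot u / sin u^2 + real p^2 * cot u / sin (real p * u)^2"
proof -
  have sm: "sin (real p * (-u)) \<noteq> 0" using spu by simp
  have nz: "sin (pi * real a / real p - u) \<noteq> 0" for a
    using sin_grid_nz[OF p sm, of a] by (simp add: algebra_simps)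
  have e1: "(\<Sum>a\<in>{1..<p}. cot (pi * real a / real p - u)) = - real p * cot (real p * u) + cot u"
  proof -
    have "(\<Sum>a<p. cot (-u + pi * real a / real p)) = real p * cot (real p * (-u))" using G1[OF p sm] .
    moreover have "(\<Sum>a<p. cot (-u + pi * real a / real p)) = cot (-u) + (\<Sum>a\<in>{1..<p}. cot (-u + pi * real a / real p))"
      using split0[OF p, of "\<lambda>a. cot (-u + pi * real a / real p)"] by simp
    ultimately show ?thesis by (simp add: algebra_simps)
  qed
  have e2: "(\<Sum>a\<in>{1..<p}. 1 / sin (pi * real a / real p - u) ^ 2) = real p ^ 2 / sin (real p * u) ^ 2 - 1 / sin u ^ 2"
  proof -
    have "(\<Sum>a<p. 1 / sin (-u + pi * real a / real p) ^ 2) = real p ^ 2 / sin (real p * (-u)) ^ 2" using G2[OF p sm] .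
    moreover have "(\<Sum>a<p. 1 / sin (-u + pi * real a / real p) ^ 2) = 1 / sin (-u) ^ 2 + (\<Sum>a\<in>{1..<p}. 1 / sin (-u + pi * real a / real p) ^ 2)"
      using split0[OF p, of "\<lambda>a. 1 / sin (-u + pi * real a / real p) ^ 2"] by simp
    ultimately show ?thesis by (simp add: algebra_simps)
  qed
  have "(\<Sum>a\<in>{1..<p}. cot (pi * real a / real p) / sin (pi * real a / real p - u)^2)
      = (\<Sum>a\<in>{1..<p}. (cot (pi * real a / real p) - cot (pi * real a / real p - u)) / sin u ^ 2 + cot u * (1 / sin (pi * real a / real p - u) ^ 2))"
    by (intro sum.cong refl) (simp add: P0 sin_grid0_nz su nz)
  also have "\<dots> = ((\<Sum>a\<in>{1..<p}. cot (pi * real a / real p)) - (\<Sum>a\<in>{1..<p}. cot (pi * real a / real p - u))) / sin u ^ 2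
        + cot u * (\<Sum>a\<in>{1..<p}. 1 / sin (pi * real a / real p - u) ^ 2)"
    by (simp only: sum.distrib sum_subtractf[symmetric] sum_divide_distrib[symmetric] sum_distrib_left[symmetric])
  also have "\<dots> = (0 - (- real p * cot (real p * u) + cot u)) / sin u ^ 2 + cot u * (real p ^ 2 / sin (real p * u) ^ 2 - 1 / sin u ^ 2)"
    by (simp only: Z1 e1 e2)
  also have "\<dots> = real p * cot (real p * u) / sin u^2 - 2 * cot u / sin u^2 + real p^2 * cot u / sin (real p * u)^2"
    using su spu by (simp add: field_simps)
  finally show ?thesis .
qed

lemma cong_shift:
  fixes p q :: nat and e :: int
  assumes "[int q = e] (mod int p)"
  obtains k :: int where "real q = real_of_int e + real p * of_int k"
proof -
  obtain k where "e = int q + int p * k" using assms by (auto simp: cong_iff_lin)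
  hence "real q = real_of_int e + real p * of_int (-k)" by (simp add: algebra_simps)
  thus ?thesis using that by blast
qed

lemma shift_theta:
  fixes p q j :: nat and e :: int
  assumes p: "p \<ge> 1" and cq: "[int q = e] (mod int p)" and e: "e = 1 \<or> e = -1" and j: "j \<in> {1..<p}"
  shows "sin (pi * real j / real p) \<noteq> 0"
    "cot (real q * (pi * real j / real p)) = real_of_int e * cot (pi * real j / real p)"
    "sin (real q * (pi * real j / real p)) ^ 2 = sin (pi * real j / real p) ^ 2"
    "sin (real q * (pi * real j / real p)) \<noteq> 0"
proof -
  show sj: "sin (pi * real j / real p) \<noteq> 0" using sin_grid0_nz[OF j] .
  obtain k where k: "real q = real_of_int e + real p * of_int k" using cong_shift[OF cq] .
  have eq: "real q * (pi * real j / real p) = real_of_int e * (pi * real j / real p) + of_int (int j * k) * pi"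
    using p by (simp add: k field_simps)
  show "cot (real q * (pi * real j / real p)) = real_of_int e * cot (pi * real j / real p)"
    unfolding eq cot_shift_int using e by auto
  show s2: "sin (real q * (pi * real j / real p)) ^ 2 = sin (pi * real j / real p) ^ 2"
    unfolding eq sin2_shift_int using e by auto
  show "sin (real q * (pi * real j / real p)) \<noteq> 0" using s2 sj by auto
qed

lemma R_sums:
  fixes p q j :: nat and e :: int
  assumes p: "p \<ge> 1" and q: "q \<ge> 1" and cq: "[int q = e] (mod int p)" and e: "e = 1 \<or> e = -1" and j: "j \<in> {1..<p}"
  defines "th \<equiv> pi * real j / real p"
  shows "(\<Sum>c\<in>{1..<q}. cot (pi * real c / real q + th)) = (real_of_int e * real q - 1) * cot th"
    "(\<Sum>c\<in>{1..<q}. 1 / sin (pi * real c / real q + th) ^ 2) = (real q ^ 2 - 1) * (1 / sin th ^ 2)"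
    "(\<Sum>c\<in>{1..<q}. cot (pi * real c / real q + th) * (1 / sin (pi * real c / real q + th) ^ 2)) = (real_of_int e * real q ^ 3 - 1) * (cot th * (1 / sin th ^ 2))"
proof -
  note st = shift_theta[OF p cq e j, folded th_def]
  have c1: "(\<Sum>c<q. cot (th + pi * real c / real q)) = cot th + (\<Sum>c\<in>{1..<q}. cot (pi * real c / real q + th))"
    using split0[OF q, of "\<lambda>c. cot (th + pi * real c / real q)"] by (simp add: add.commute)
  show "(\<Sum>c\<in>{1..<q}. cot (pi * real c / real q + th)) = (real_of_int e * real q - 1) * cot th"
    using G1[OF q st(4)] c1 st(2) by (simp add: algebra_simps)
  have c2: "(\<Sum>c<q. 1 / sin (th + pi * real c / real q) ^ 2) = 1 / sin th ^ 2 + (\<Sum>c\<in>{1..<q}. 1 / sin (pi * real c / real q + th) ^ 2)"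
    using split0[OF q, of "\<lambda>c. 1 / sin (th + pi * real c / real q) ^ 2"] by (simp add: add.commute)
  show "(\<Sum>c\<in>{1..<q}. 1 / sin (pi * real c / real q + th) ^ 2) = (real q ^ 2 - 1) * (1 / sin th ^ 2)"
  proof -
    have "(\<Sum>c\<in>{1..<q}. 1 / sin (pi * real c / real q + th) ^ 2) = real q ^ 2 / sin th ^ 2 - 1 / sin th ^ 2"
      using G2[OF q st(4)] c2 st(3) by simp
    thus ?thesis by (simp add: diff_divide_distrib left_diff_distrib)
  qed
  have c3: "(\<Sum>c<q. cot (th + pi * real c / real q) / sin (th + pi * real c / real q) ^ 2) = cot th / sin th ^ 2 + (\<Sum>c\<in>{1..<q}. cot (pi * real c / real q + th) * (1 / sin (pi * real c / real q + th) ^ 2))"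
    using split0[OF q, of "\<lambda>c. cot (th + pi * real c / real q) / sin (th + pi * real c / real q) ^ 2"] by (simp add: add.commute)
  show "(\<Sum>c\<in>{1..<q}. cot (pi * real c / real q + th) * (1 / sin (pi * real c / real q + th) ^ 2)) = (real_of_int e * real q ^ 3 - 1) * (cot th * (1 / sin th ^ 2))"
    using G3[OF q st(4)] c3 st(2,3) by (simp add: algebra_simps)
qed

lemma atomsC: fixes P CP SP A Y K1 K2 K3 :: real
  assumes "P \<noteq> 0" "P*CP = Y + K1" "P^2*SP = A + K2" "P^3*(CP*SP) = Y*A + K3" "CP^2 = SP - 1" "Y^2 = A - 1"
  shows "P*CP^2*A - 2*CP*Y*A + P^2*CP*Y*SP = (1/P - P)*A + 1/P*(K2*A - 2*K1*Y*A + K3*Y)"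
proof -
  have "P*(P*CP^2*A - 2*CP*Y*A + P^2*CP*Y*SP) = (1 - P^2)*A + (K2*A - 2*K1*Y*A + K3*Y)"
    using assms(2-6) by algebra
  moreover have "P * ((1/P - P)*A + 1/P*(K2*A - 2*K1*Y*A + K3*Y)) = (1 - P^2)*A + (K2*A - 2*K1*Y*A + K3*Y)"
    using assms(1) by (simp add: field_simps power2_eq_square)
  ultimately show ?thesis using assms(1) by (metis mult_left_cancel)
qed

lemma cot2: "sin y \<noteq> 0 \<Longrightarrow> cot y ^ 2 = 1 / sin y ^ 2 - 1"
  by (simp add: cot_def field_simps)

lemma decomp_c:
  fixes p :: nat and v :: real
  assumes p: "p \<ge> 1" and sv: "sin v \<noteq> 0" and spv: "sin (real p * v) \<noteq> 0"
  shows "real p * cot (real p * v) ^ 2 * (1 / sin v ^ 2) - 2 * cot (real p * v) * cot v * (1 / sin v ^ 2)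
       + real p ^ 2 * cot (real p * v) * cot v * (1 / sin (real p * v) ^ 2)
     = (1 / real p - real p) * (1 / sin v ^ 2) + 1 / real p * (\<Sum>j\<in>{1..<p}.
         (1/sin (v + pi * real j / real p)^2) * (1/sin v^2) - 2 * (cot (v + pi * real j / real p) * cot v * (1/sin v^2))
         + cot (v + pi * real j / real p) * (1/sin (v + pi * real j / real p)^2) * cot v)"
proof -
  define K1 where "K1 = (\<Sum>j\<in>{1..<p}. cot (v + pi * real j / real p))"
  define K2 where "K2 = (\<Sum>j\<in>{1..<p}. 1 / sin (v + pi * real j / real p) ^ 2)"
  define K3 where "K3 = (\<Sum>j\<in>{1..<p}. cot (v + pi * real j / real p) / sin (v + pi * real j / real p) ^ 2)"
  have h1: "real p * cot (real p * v) = cot v + K1"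
    using G1[OF p spv] split0[OF p, of "\<lambda>j. cot (v + pi * real j / real p)"] by (simp add: K1_def)
  have h2: "real p ^ 2 * (1 / sin (real p * v) ^ 2) = 1 / sin v ^ 2 + K2"
    using G2[OF p spv] split0[OF p, of "\<lambda>j. 1 / sin (v + pi * real j / real p) ^ 2"] by (simp add: K2_def)
  have h3: "real p ^ 3 * (cot (real p * v) * (1 / sin (real p * v) ^ 2)) = cot v * (1 / sin v ^ 2) + K3"
    using G3[OF p spv] split0[OF p, of "\<lambda>j. cot (v + pi * real j / real p) / sin (v + pi * real j / real p) ^ 2"] by (simp add: K3_def)
  have sumE: "(\<Sum>j\<in>{1..<p}.
         (1/sin (v + pi * real j / real p)^2) * (1/sin v^2) - 2 * (cot (v + pi * real j / real p) * cot v * (1/sin v^2))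
         + cot (v + pi * real j / real p) * (1/sin (v + pi * real j / real p)^2) * cot v)
       = K2 * (1 / sin v ^ 2) - 2 * K1 * cot v * (1 / sin v ^ 2) + K3 * cot v"
    by (simp add: K1_def K2_def K3_def sum.distrib sum_subtractf sum_distrib_left sum_distrib_right mult_ac)
  have pz: "real p \<noteq> 0" using p by simp
  show ?thesis unfolding sumE
    by (rule atomsC[OF pz h1 h2 h3 cot2[OF spv] cot2[OF sv]])
qed

lemma step3:
  fixes p q :: nat and e :: int
  assumes p: "p \<ge> 1" and q: "q \<ge> 1" and cq: "[int q = e] (mod int p)" and e: "e = 1 \<or> e = -1"
  shows "(\<Sum>c\<in>{1..<q}. real p * cot (real p * (pi * real c / real q)) ^ 2 * (1 / sin (pi * real c / real q) ^ 2)
          - 2 * cot (real p * (pi * real c / real q)) * cot (pi * real c / real q) * (1 / sin (pi * real c / real q) ^ 2)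
          + real p ^ 2 * cot (real p * (pi * real c / real q)) * cot (pi * real c / real q) * (1 / sin (real p * (pi * real c / real q)) ^ 2))
       = (3 * real_of_int e * real q - 2 - real_of_int e * real q ^ 3) * (real p ^ 2 - 1) * (real p ^ 2 - 4) / (45 * real p)"
proof -
  have cop: "coprime p q" using coprime_of_cong[OF cq e] .
  define Ec where "Ec v th = 3 * (1/sin th^2) * (1/sin v^2) + 3 * cot th * (1/sin th^2) * (cot (v+th) - cot v) - 2 * cot th * cot v * (1/sin v^2) - cot th * cot (v+th) * (1/sin (v+th)^2)" for v th :: real
  have step_c: "real p * cot (real p * (pi * real c / real q)) ^ 2 * (1 / sin (pi * real c / real q) ^ 2)
          - 2 * cot (real p * (pi * real c / real q)) * cot (pi * real c / real q) * (1 / sin (pi * real c / real q) ^ 2)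
          + real p ^ 2 * cot (real p * (pi * real c / real q)) * cot (pi * real c / real q) * (1 / sin (real p * (pi * real c / real q)) ^ 2)
       = (1 / real p - real p) * (1 / sin (pi * real c / real q) ^ 2) + 1 / real p * (\<Sum>j\<in>{1..<p}. Ec (pi * real c / real q) (pi * real j / real p))"
    if c: "c \<in> {1..<q}" for c
  proof -
    have sv: "sin (pi * real c / real q) \<noteq> 0" using sin_grid0_nz[OF c] .
    have spv: "sin (real p * (pi * real c / real q)) \<noteq> 0" using sin_pv_nz[OF cop c] .
    show ?thesis unfolding decomp_c[OF p sv spv]
    proof (intro arg_cong2[where f="(+)"] refl arg_cong2[where f="(*)"] sum.cong)
      fix j assume j: "j \<in> {1..<p}"
      show "1 / sin (pi * real c / real q + pi * real j / real p) ^ 2 * (1 / sin (pi * real c / real q) ^ 2) -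
         2 * (cot (pi * real c / real q + pi * real j / real p) * cot (pi * real c / real q) * (1 / sin (pi * real c / real q) ^ 2)) +
         cot (pi * real c / real q + pi * real j / real p) * (1 / sin (pi * real c / real q + pi * real j / real p) ^ 2) * cot (pi * real c / real q) =
         Ec (pi * real c / real q) (pi * real j / real p)"
        unfolding Ec_def by (rule Etrig[OF sv sin_grid0_nz[OF j] sin_grid_nz[OF p spv]])
    qed
  qed
  have sumEc: "(\<Sum>c\<in>{1..<q}. Ec (pi * real c / real q) (pi * real j / real p))
      = (real q ^ 2 - 1) * (1 / sin (pi * real j / real p) ^ 2)
        + (3 * real_of_int e * real q - 2 - real_of_int e * real q ^ 3) * (1 / sin (pi * real j / real p) ^ 4 - 1 / sin (pi * real j / real p) ^ 2)"
    if j: "j \<in> {1..<p}" for j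
  proof -
    note R = R_sums[OF p q cq e j]
    define th where "th = pi * real j / real p"
    have sth: "sin th \<noteq> 0" unfolding th_def using sin_grid0_nz[OF j] .
    have "(\<Sum>c\<in>{1..<q}. Ec (pi * real c / real q) th)
       = 3 * (1/sin th^2) * (\<Sum>c\<in>{1..<q}. 1/sin (pi * real c / real q)^2)
         + 3 * cot th * (1/sin th^2) * ((\<Sum>c\<in>{1..<q}. cot (pi * real c / real q + th)) - (\<Sum>c\<in>{1..<q}. cot (pi * real c / real q)))
         - 2 * cot th * (\<Sum>c\<in>{1..<q}. cot (pi * real c / real q) / sin (pi * real c / real q)^2)
         - cot th * (\<Sum>c\<in>{1..<q}. cot (pi * real c / real q + th) * (1 / sin (pi * real c / real q + th) ^ 2))"
      unfolding Ec_def by (simp add: sum.distrib sum_subtractf sum_distrib_left algebra_simps)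
    also have "\<dots> = 3 * (1/sin th^2) * ((real q ^ 2 - 1) / 3)
         + 3 * cot th * (1/sin th^2) * ((real_of_int e * real q - 1) * cot th - 0)
         - 2 * cot th * 0
         - cot th * ((real_of_int e * real q ^ 3 - 1) * (cot th * (1 / sin th ^ 2)))"
      unfolding Z2[OF q] Z1 Z3 R[folded th_def] ..
    also have "\<dots> = (real q ^ 2 - 1) * (1 / sin th ^ 2)
        + (3 * real_of_int e * real q - 2 - real_of_int e * real q ^ 3) * (cot th ^ 2 * (1 / sin th ^ 2))"
      using sth by (simp add: field_simps power2_eq_square power3_eq_cube)
    also have "cot th ^ 2 * (1 / sin th ^ 2) = 1 / sin th ^ 4 - 1 / sin th ^ 2"
      unfolding cot2[OF sth] using sth by (simp add: field_simps power2_eq_square eval_nat_numeral)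
    finally show ?thesis unfolding th_def .
  qed
  have sw: "(\<Sum>c\<in>{1..<q}. \<Sum>j\<in>{1..<p}. Ec (pi * real c / real q) (pi * real j / real p))
     = (\<Sum>j\<in>{1..<p}. (real q ^ 2 - 1) * (1 / sin (pi * real j / real p) ^ 2)
        + (3 * real_of_int e * real q - 2 - real_of_int e * real q ^ 3) * (1 / sin (pi * real j / real p) ^ 4 - 1 / sin (pi * real j / real p) ^ 2))"
    by (subst sum.swap) (rule sum.cong[OF refl sumEc])
  have "(\<Sum>c\<in>{1..<q}. real p * cot (real p * (pi * real c / real q)) ^ 2 * (1 / sin (pi * real c / real q) ^ 2)
          - 2 * cot (real p * (pi * real c / real q)) * cot (pi * real c / real q) * (1 / sin (pi * real c / real q) ^ 2)
          + real p ^ 2 * cot (real p * (pi * real c / real q)) * cot (pi * real c / real q) * (1 / sin (real p * (pi * real c / real q)) ^ 2))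
      = (\<Sum>c\<in>{1..<q}. (1 / real p - real p) * (1 / sin (pi * real c / real q) ^ 2) + 1 / real p * (\<Sum>j\<in>{1..<p}. Ec (pi * real c / real q) (pi * real j / real p)))"
    by (rule sum.cong[OF refl step_c])
  also have "\<dots> = (1 / real p - real p) * (\<Sum>c\<in>{1..<q}. 1 / sin (pi * real c / real q) ^ 2)
        + 1 / real p * (\<Sum>c\<in>{1..<q}. \<Sum>j\<in>{1..<p}. Ec (pi * real c / real q) (pi * real j / real p))"
    by (simp only: sum.distrib sum_distrib_left[symmetric])
  also have "\<dots> = (1 / real p - real p) * ((real q ^ 2 - 1) / 3)
        + 1 / real p * (\<Sum>j\<in>{1..<p}. (real q ^ 2 - 1) * (1 / sin (pi * real j / real p) ^ 2)
        + (3 * real_of_int e * real q - 2 - real_of_int e * real q ^ 3) * (1 / sin (pi * real j / real p) ^ 4 - 1 / sin (pi * real j / real p) ^ 2))"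
    unfolding Z2[OF q] sw ..
  also have "\<dots> = (1 / real p - real p) * ((real q ^ 2 - 1) / 3)
        + 1 / real p * ((real q ^ 2 - 1) * ((real p ^ 2 - 1) / 3)
        + (3 * real_of_int e * real q - 2 - real_of_int e * real q ^ 3) * ((real p ^ 2 - 1) * (real p ^ 2 + 11) / 45 - (real p ^ 2 - 1) / 3))"
    by (simp only: sum.distrib sum_subtractf sum_distrib_left[symmetric] Z2[OF p] Z4[OF p])
  also have "\<dots> = (3 * real_of_int e * real q - 2 - real_of_int e * real q ^ 3) * (real p ^ 2 - 1) * (real p ^ 2 - 4) / (45 * real p)"
    using p by (simp add: field_simps) (simp add: algebra_simps power2_eq_square)
  finally show ?thesis .
qed

lemma sin2_sign: "e = 1 \<or> e = -1 \<Longrightarrow> sin (real_of_int e * z) ^ 2 = sin z ^ 2"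
  by (cases "e = 1") auto

lemma values_n:
  fixes p q a c n :: nat and e k m :: int
  assumes p: "p \<ge> 1" and q: "q \<ge> 1" and e: "e = 1 \<or> e = -1"
    and qm: "real q = real_of_int e + real p * of_int m"
    and n: "real n = real_of_int e * (real a * real q - real c * real p) + real p * real q * of_int k"
  shows "cot (pi * real n / real p) = cot (pi * real a / real p)"
    "cot (pi * real n / real q) = - real_of_int e * cot (real p * (pi * real c / real q))"
    "sin (pi * real n / real (p * q)) ^ 2 = sin (pi * real a / real p - pi * real c / real q) ^ 2"
proof -
  have pp: "real p > 0" and qp: "real q > 0" using p q by auto
  have "pi * real n / real p = pi * real a / real p + of_int (e*a*m - e*c + int q*k) * pi"
    using e
  proof
    assume e1: "e = 1"
    show ?thesis using pp unfolding n e1 by (simp add: qm e1 field_simps)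
  next
    assume e1: "e = -1"
    show ?thesis using pp unfolding n e1 by (simp add: qm e1 field_simps)
  qed
  thus "cot (pi * real n / real p) = cot (pi * real a / real p)" by (simp only: cot_shift_int)
  have "pi * real n / real q = - real_of_int e * (real p * (pi * real c / real q)) + of_int (e*a + int p*k) * pi"
    using pp qp unfolding n by (simp add: field_simps)
  hence "cot (pi * real n / real q) = cot (- real_of_int e * (real p * (pi * real c / real q)))" by (simp only: cot_shift_int)
  also have "\<dots> = - real_of_int e * cot (real p * (pi * real c / real q))" using e by auto
  finally show "cot (pi * real n / real q) = - real_of_int e * cot (real p * (pi * real c / real q))" .
  have "pi * real n / real (p * q) = real_of_int e * (pi * real a / real p - pi * real c / real q) + of_int k * pi"
    using pp qp unfolding n by (simp add: field_simps)
  hence "sin (pi * real n / real (p * q)) ^ 2 = sin (real_of_int e * (pi * real a / real p - pi * real c / real q)) ^ 2"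
    by (simp only: sin2_shift_int)
  also have "\<dots> = sin (pi * real a / real p - pi * real c / real q) ^ 2" using sin2_sign[OF e] .
  finally show "sin (pi * real n / real (p * q)) ^ 2 = sin (pi * real a / real p - pi * real c / real q) ^ 2" .
qed



lemma small_mod_eq:
  fixes a b :: int and m :: int
  assumes "0 \<le> a" "a < m" "0 \<le> b" "b < m" "m dvd (a - b)"
  shows "a = b"
proof -
  have "a mod m = b mod m" using assms(5) by (simp add: mod_eq_dvd_iff)
  thus ?thesis using assms(1-4) by simp
qed

lemma dvd_plus_mult: fixes m x w :: int shows "m dvd x + m * w \<longleftrightarrow> m dvd x"
proof
  assume h: "m dvd x + m * w"
  have "m dvd (x + m * w) - m * w" by (rule dvd_diff[OF h dvd_triv_left])
  thus "m dvd x" by simp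
next
  assume "m dvd x" thus "m dvd x + m * w" by (rule dvd_add[OF _ dvd_triv_left])
qed

lemma bij_grid:
  fixes p q :: nat and e :: int
  assumes p: "p \<ge> 1" and q: "q \<ge> 1" and cq: "[int q = e] (mod int p)" and e: "e = 1 \<or> e = -1"
  shows "bij_betw (\<lambda>(a,c). nat ((e * (int a * int q - int c * int p)) mod (int p * int q)))
           ({1..<p} \<times> {1..<q}) {n. 1 \<le> n \<and> n \<le> p * q - 1 \<and> \<not> p dvd n \<and> \<not> q dvd n}"
proof -
  have ee: "e * e = 1" using e by auto
  obtain k where k: "e = int q + int p * k" using cq by (auto simp: cong_iff_lin)
  define m where "m = - k"
  have Qm: "int q = e + int p * m" using k by (simp add: m_def)
  have copn: "coprime p q" using coprime_of_cong[OF cq e] .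
  hence cop: "coprime (int p) (int q)" by simp
  hence cop': "coprime (int q) (int p)" by (simp add: coprime_commute)
  define X where "X a c = e * (int a * int q - int c * int p)" for a c :: nat
  have XP: "X a c = int a + int p * (int a * e * m - e * int c)" for a c
  proof -
    have "X a c = int a * (e * int q) - e * int c * int p" by (simp add: X_def algebra_simps)
    also have "e * int q = 1 + int p * (e * m)" unfolding Qm using ee by (simp add: algebra_simps)
    finally show ?thesis by (simp add: algebra_simps)
  qed
  have XQ: "X a c = - e * int c * int p + int q * (e * int a)" for a c by (simp add: X_def algebra_simps)
  define N where "N = int p * int q"
  have Npos: "N > 0" using p q by (simp add: N_def)
  define h where "h = (\<lambda>(a,c). nat (X a c mod N))"
  have h_eq: "(\<lambda>(a,c). nat ((e * (int a * int q - int c * int p)) mod (int p * int q))) = h"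
    by (simp add: h_def X_def N_def)
  have pdvdN: "int p dvd N" and qdvdN: "int q dvd N" by (simp_all add: N_def)
  have eunit: "int q dvd e * z \<Longrightarrow> int q dvd z" for z
  proof -
    assume "int q dvd e * z"
    hence "int q dvd e * (e * z)" by simp
    thus ?thesis using ee by (simp add: mult.assoc[symmetric])
  qed
  show ?thesis unfolding h_eq bij_betw_def
  proof (intro conjI)
    show "inj_on h ({1..<p} \<times> {1..<q})"
    proof (rule inj_onI, clarify)
      fix a c a' c' assume a: "a \<in> {1..<p}" and c: "c \<in> {1..<q}" and a': "a' \<in> {1..<p}" and c': "c' \<in> {1..<q}"
        and eq: "h (a, c) = h (a', c')"
      have "X a c mod N = X a' c' mod N" using eq Npos by (simp add: h_def eq_nat_nat_iff)
      hence Nd: "N dvd X a c - X a' c'" by (simp add: mod_eq_dvd_iff)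
      have "int p dvd X a c - X a' c'" using dvd_trans[OF pdvdN Nd] .
      moreover have "X a c - X a' c' = (int a - int a') + int p * ((int a * e * m - e * int c) - (int a' * e * m - e * int c'))"
        unfolding XP by (simp add: algebra_simps)
      ultimately have "int p dvd (int a - int a')" by (simp only: dvd_plus_mult)
      hence aa: "int a = int a'" using a a' by (intro small_mod_eq[of _ "int p"]) auto
      have "int q dvd X a c - X a' c'" using dvd_trans[OF qdvdN Nd] .
      moreover have "X a c - X a' c' = e * (int p * (int c' - int c)) + int q * (e * int a - e * int a')"
        unfolding XQ by (simp add: algebra_simps)
      ultimately have "int q dvd e * (int p * (int c' - int c))" by (simp only: dvd_plus_mult)
      hence "int q dvd int p * (int c' - int c)" by (rule eunit)
      hence "int q dvd (int c' - int c)" by (simp only: coprime_dvd_mult_right_iff[OF cop'])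
      hence "int c' = int c" using c c' by (intro small_mod_eq[of _ "int q"]) auto
      thus "a = a' \<and> c = c'" using aa by simp
    qed
  next
    show "h ` ({1..<p} \<times> {1..<q}) = {n. 1 \<le> n \<and> n \<le> p * q - 1 \<and> \<not> p dvd n \<and> \<not> q dvd n}"
    proof
      show "h ` ({1..<p} \<times> {1..<q}) \<subseteq> {n. 1 \<le> n \<and> n \<le> p * q - 1 \<and> \<not> p dvd n \<and> \<not> q dvd n}"
      proof clarify
        fix a c assume a: "a \<in> {1..<p}" and c: "c \<in> {1..<q}"
        define H where "H = X a c mod N"
        have H0: "0 \<le> H" "H < N" using Npos by (simp_all add: H_def)
        have hH: "h (a, c) = nat H" by (simp add: h_def H_def)
        have ndp: "\<not> int p dvd H"
        proof
          assume "int p dvd H"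
          hence "int p dvd X a c" by (simp add: H_def dvd_mod_iff[OF pdvdN])
          hence "int p dvd int a" unfolding XP by (simp only: dvd_plus_mult)
          hence "p dvd a" by simp
          thus False using a by (auto dest: dvd_imp_le)
        qed
        have ndq: "\<not> int q dvd H"
        proof
          assume "int q dvd H"
          hence "int q dvd X a c" by (simp add: H_def dvd_mod_iff[OF qdvdN])
          hence "int q dvd - e * int c * int p" unfolding XQ by (simp only: dvd_plus_mult)
          hence "int q dvd e * (- (int c * int p))" by (simp add: algebra_simps)
          hence "int q dvd - (int c * int p)" by (rule eunit)
          hence "int q dvd int p * int c" by (simp add: mult.commute)
          hence "int q dvd int c" by (simp only: coprime_dvd_mult_right_iff[OF cop'])
          hence "q dvd c" by simp
          thus False using c by (auto dest: dvd_imp_le)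
        qed
        have "int (nat H) = H" using H0 by simp
        hence "\<not> p dvd nat H" "\<not> q dvd nat H" using ndp ndq int_dvd_int_iff[of p "nat H"] int_dvd_int_iff[of q "nat H"] by simp_all
        moreover have "nat H \<noteq> 0" using \<open>\<not> p dvd nat H\<close> by auto
        moreover have "nat H < p * q" using H0 by (simp add: N_def nat_less_iff)
        ultimately show "1 \<le> h (a, c) \<and> h (a, c) \<le> p * q - 1 \<and> \<not> p dvd h (a, c) \<and> \<not> q dvd h (a, c)"
          unfolding hH by auto
      qed
    next
      show "{n. 1 \<le> n \<and> n \<le> p * q - 1 \<and> \<not> p dvd n \<and> \<not> q dvd n} \<subseteq> h ` ({1..<p} \<times> {1..<q})"
      proof clarify
        fix n assume n1: "1 \<le> n" and n2: "n \<le> p * q - 1" and np: "\<not> p dvd n" and nq: "\<not> q dvd n"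
        obtain p' where "[int p * p' = 1] (mod int q)" using cong_solve_coprime_int[OF cop] by blast
        then obtain t where t: "1 = int p * p' + int q * t" by (auto simp: cong_iff_lin)
        define a where "a = n mod p"
        define cI where "cI = (- e * p' * int n) mod int q"
        define c where "c = nat cI"
        have cI0: "0 \<le> cI" "cI < int q" using q by (simp_all add: cI_def)
        have ci: "int c = cI" using cI0 by (simp add: c_def)
        have ai: "int a = int n - int p * (int n div int p)" by (simp add: a_def zmod_int minus_mult_div_eq_mod)
        have cI_eq: "cI = - e * p' * int n - int q * ((- e * p' * int n) div int q)"
          by (simp add: cI_def minus_mult_div_eq_mod)
        have "a \<noteq> 0" using np by (simp add: a_def dvd_eq_mod_eq_0)
        hence aR: "a \<in> {1..<p}" using p by (simp add: a_def)
        have "c \<noteq> 0"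
        proof
          assume "c = 0"
          hence "int q dvd - e * p' * int n" using ci by (simp add: cI_def dvd_eq_mod_eq_0)
          hence "int q dvd e * (- (p' * int n))" by (simp add: algebra_simps)
          hence "int q dvd - (p' * int n)" by (rule eunit)
          hence "int q dvd int p * (p' * int n) + int q * (t * int n)" by simp
          also have "int p * (p' * int n) + int q * (t * int n) = (int p * p' + int q * t) * int n" by (simp add: algebra_simps)
          also have "\<dots> = int n" using t by simp
          finally show False using nq by simp
        qed
        moreover have "c < q" using cI0 ci by linarith
        ultimately have cR: "c \<in> {1..<q}" by simp
        have dP: "int p dvd X a c - int n"
        proof -
          have "X a c - int n = int p * (int a * e * m - e * int c - int n div int p)"
            unfolding XP using ai by (simp add: algebra_simps)
          thus ?thesis by simp
        qed
        have dQ: "int q dvd X a c - int n"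
        proof -
          have "X a c - int n = - e * cI * int p + int q * (e * int a) - int n" unfolding XQ ci ..
          also have "- e * cI * int p = (e * e) * (int p * p') * int n + int q * (e * int p * ((- e * p' * int n) div int q))"
            unfolding cI_eq by (simp add: algebra_simps)
          also have "(e * e) * (int p * p') * int n = int n - int q * (t * int n)"
          proof -
            have tp: "int p * p' = 1 - int q * t" using t by linarith
            have "(e * e) * (int p * p') * int n = (int p * p') * int n" using ee by simp
            also have "\<dots> = (1 - int q * t) * int n" unfolding tp ..
            also have "\<dots> = int n - int q * (t * int n)" by (simp add: algebra_simps)
            finally show ?thesis .
          qed
          finally have "X a c - int n = int q * (e * int p * ((- e * p' * int n) div int q) + e * int a - t * int n)"
            by (simp add: algebra_simps)
          thus ?thesis by simp
        qed
        have "N dvd X a c - int n" unfolding N_def by (rule divides_mult[OF dP dQ cop])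
        hence "X a c mod N = int n mod N" by (simp add: mod_eq_dvd_iff)
        also have "int n mod N = int n"
        proof -
          have "p * q \<ge> 1" using p q by simp
          hence "n < p * q" using n2 by linarith
          hence "int n < N" unfolding N_def by (simp flip: of_nat_mult)
          thus ?thesis by simp
        qed
        finally have "h (a, c) = n" by (simp add: h_def)
        moreover have "(a, c) \<in> {1..<p} \<times> {1..<q}" using aR cR by simp
        ultimately show "n \<in> h ` ({1..<p} \<times> {1..<q})" by (rule image_eqI[OF sym])
      qed
    qed
  qed
qed

lemma main_general:
  fixes p q :: nat and e :: int
  assumes p: "p \<ge> 1" and q: "q \<ge> 1" and cq: "[int q = e] (mod int p)" and e: "e = 1 \<or> e = -1"
  shows "(\<Sum>n\<in>{n. 1 \<le> n \<and> n \<le> p * q - 1 \<and> \<not> p dvd n \<and> \<not> q dvd n}.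
      cot (pi * real n / real p) * cot (pi * real n / real q) / (sin (pi * real n / real (p * q)))\<^sup>2)
    = (real q ^ 3 - 3 * real q + 2 * real_of_int e) * (real p ^ 2 - 1) * (real p ^ 2 - 4) / (45 * real p)"
proof -
  define g where "g n = cot (pi * real n / real p) * cot (pi * real n / real q) / (sin (pi * real n / real (p * q)))\<^sup>2" for n :: nat
  define h where "h = (\<lambda>(a,c). nat ((e * (int a * int q - int c * int p)) mod (int p * int q)))"
  have cop: "coprime p q" using coprime_of_cong[OF cq e] .
  obtain m where qm: "real q = real_of_int e + real p * of_int m" using cong_shift[OF cq] .
  have gval: "g (h (a, c)) = - real_of_int e * cot (real p * (pi * real c / real q)) * (cot (pi * real a / real p) / sin (pi * real a / real p - pi * real c / real q) ^ 2)" for a c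
  proof -
    define X where "X = e * (int a * int q - int c * int p)"
    define N where "N = int p * int q"
    have Npos: "N > 0" using p q by (simp add: N_def)
    have "int (h (a, c)) = X mod N" using Npos by (simp add: h_def X_def N_def)
    also have "\<dots> = X - N * (X div N)" by (simp add: minus_mult_div_eq_mod)
    finally have "real (h (a, c)) = real_of_int (X - N * (X div N))" by (metis of_int_of_nat_eq)
    hence rn: "real (h (a, c)) = real_of_int e * (real a * real q - real c * real p) + real p * real q * of_int (- (X div N))"
      by (simp add: X_def N_def)
    note v = values_n[OF p q e qm rn]
    show ?thesis unfolding g_def v by (simp add: algebra_simps)
  qed
  have "(\<Sum>n\<in>{n. 1 \<le> n \<and> n \<le> p * q - 1 \<and> \<not> p dvd n \<and> \<not> q dvd n}. g n) = (\<Sum>x\<in>{1..<p} \<times> {1..<q}. g (h x))"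
    by (rule sum.reindex_bij_betw[symmetric]) (unfold h_def, rule bij_grid[OF p q cq e])
  also have "\<dots> = (\<Sum>a\<in>{1..<p}. \<Sum>c\<in>{1..<q}. g (h (a, c)))"
    by (simp add: sum.cartesian_product)
  also have "\<dots> = (\<Sum>c\<in>{1..<q}. \<Sum>a\<in>{1..<p}. g (h (a, c)))"
    by (rule sum.swap)
  also have "\<dots> = (\<Sum>c\<in>{1..<q}. - real_of_int e * (real p * cot (real p * (pi * real c / real q)) ^ 2 * (1 / sin (pi * real c / real q) ^ 2)
          - 2 * cot (real p * (pi * real c / real q)) * cot (pi * real c / real q) * (1 / sin (pi * real c / real q) ^ 2)
          + real p ^ 2 * cot (real p * (pi * real c / real q)) * cot (pi * real c / real q) * (1 / sin (real p * (pi * real c / real q)) ^ 2)))"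
  proof (rule sum.cong[OF refl])
    fix c assume c: "c \<in> {1..<q}"
    have sv: "sin (pi * real c / real q) \<noteq> 0" using sin_grid0_nz[OF c] .
    have spv: "sin (real p * (pi * real c / real q)) \<noteq> 0" using sin_pv_nz[OF cop c] .
    have "(\<Sum>a\<in>{1..<p}. g (h (a, c))) = - real_of_int e * cot (real p * (pi * real c / real q)) *
        (\<Sum>a\<in>{1..<p}. cot (pi * real a / real p) / sin (pi * real a / real p - pi * real c / real q) ^ 2)"
      by (simp add: gval sum_distrib_left)
    also have "\<dots> = - real_of_int e * cot (real p * (pi * real c / real q)) *
        (real p * cot (real p * (pi * real c / real q)) / sin (pi * real c / real q)^2 - 2 * cot (pi * real c / real q) / sin (pi * real c / real q)^2
         + real p^2 * cot (pi * real c / real q) / sin (real p * (pi * real c / real q))^2)"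
      by (simp only: inner_sum[OF p sv spv])
    also have "\<dots> = - real_of_int e * (real p * cot (real p * (pi * real c / real q)) ^ 2 * (1 / sin (pi * real c / real q) ^ 2)
          - 2 * cot (real p * (pi * real c / real q)) * cot (pi * real c / real q) * (1 / sin (pi * real c / real q) ^ 2)
          + real p ^ 2 * cot (real p * (pi * real c / real q)) * cot (pi * real c / real q) * (1 / sin (real p * (pi * real c / real q)) ^ 2))"
      by (simp add: algebra_simps power2_eq_square)
    finally show "(\<Sum>a\<in>{1..<p}. g (h (a, c))) = \<dots>" .
  qed
  also have "\<dots> = - real_of_int e * ((3 * real_of_int e * real q - 2 - real_of_int e * real q ^ 3) * (real p ^ 2 - 1) * (real p ^ 2 - 4) / (45 * real p))"
    by (simp only: sum_distrib_left[symmetric] step3[OF p q cq e])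
  also have "\<dots> = (- real_of_int e * (3 * real_of_int e * real q - 2 - real_of_int e * real q ^ 3)) * (real p ^ 2 - 1) * (real p ^ 2 - 4) / (45 * real p)"
    by (simp add: mult.assoc)
  also have "- real_of_int e * (3 * real_of_int e * real q - 2 - real_of_int e * real q ^ 3) = real q ^ 3 - 3 * real q + 2 * real_of_int e"
    using e by (auto simp: algebra_simps)
  finally show ?thesis by (simp add: g_def)
qed

theorem mainTheorem12:
  fixes p q :: nat
  assumes "p \<ge> 2" and "q \<ge> 2"
    and "[q = 1] (mod p) \<or> [int q = - 1] (mod int p)"
  defines "S \<equiv> (\<Sum>n\<in>{n. 1 \<le> n \<and> n \<le> p * q - 1 \<and> \<not> p dvd n \<and> \<not> q dvd n}.
      cot (pi * real n / real p) * cot (pi * real n / real q) / (sin (pi * real n / real (p * q)))\<^sup>2)"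
  shows "([q = 1] (mod p) \<longrightarrow>
           S = (real p ^ 2 - 1) * (real p ^ 2 - 4) * (real q - 1) ^ 2 * (real q + 2) / (45 * real p))
       \<and> ([int q = - 1] (mod int p) \<longrightarrow>
           S = (real p ^ 2 - 1) * (real p ^ 2 - 4) * (real q + 1) ^ 2 * (real q - 2) / (45 * real p))"
proof (intro conjI impI)
  have p: "p \<ge> 1" and q: "q \<ge> 1" using assms(1,2) by auto
  assume c: "[q = 1] (mod p)"
  hence c': "[int q = 1] (mod int p)" using cong_int_iff[of q 1 p] by simp
  have "S = (real q ^ 3 - 3 * real q + 2 * real_of_int 1) * (real p ^ 2 - 1) * (real p ^ 2 - 4) / (45 * real p)"
    unfolding S_def by (rule main_general[OF p q c']) simp
  also have "real q ^ 3 - 3 * real q + 2 * real_of_int 1 = (real q - 1) ^ 2 * (real q + 2)"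
    by (simp add: power2_eq_square power3_eq_cube algebra_simps)
  finally show "S = (real p ^ 2 - 1) * (real p ^ 2 - 4) * (real q - 1) ^ 2 * (real q + 2) / (45 * real p)"
    by (simp add: mult_ac)
next
  have p: "p \<ge> 1" and q: "q \<ge> 1" using assms(1,2) by auto
  assume c': "[int q = - 1] (mod int p)"
  have "S = (real q ^ 3 - 3 * real q + 2 * real_of_int (-1)) * (real p ^ 2 - 1) * (real p ^ 2 - 4) / (45 * real p)"
    unfolding S_def by (rule main_general[OF p q c']) simp
  also have "real q ^ 3 - 3 * real q + 2 * real_of_int (-1) = (real q + 1) ^ 2 * (real q - 2)"
    by (simp add: power2_eq_square power3_eq_cube algebra_simps)
  finally show "S = (real p ^ 2 - 1) * (real p ^ 2 - 4) * (real q + 1) ^ 2 * (real q - 2) / (45 * real p)"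
    by (simp add: mult_ac)
qed

end
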